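(* (i) A geometric sequent $\sigma$ over the signature of $\mathbb{L}_u$ is valid in all abelian $\ell$-groups with strong unit in $\mathbf{Set}$ if and only if it is provable in $\mathbb{L}_u$. (ii) For any family $\{\phi_i\}_{i\in I}$ of geometric sentences over the signature of $\mathbb{L}_u$, the sequent $\top\vdash\bigvee_{i\in I}\phi_i$ is provable in $\mathbb{L}_u$ (equivalently, every abelian $\ell$-group with strong unit in $\mathbf{Set}$ satisfies at least one $\phi_i$) if and only if there exists a finite subset $J\subseteq I$ such that $\top\vdash\bigvee_{i\in J}\phi_i$ is provable in $\mathbb{L}_u$ (equivalently, every abelian $\ell$-group with strong unit in $\mathbf{Set}$ satisfies at least one $\phi_i$ with $i\in J$).
   Context: $\mathbb{L}_u$ is the one-sorted geometric theory over the signature with function symbols $+,-,\sup,\inf$, relation symbol $\le$ and constants $0,u$, with axioms: $(+,-,0)$ is an abelian group; $\le$ is a partial order; $\inf,\sup$ are binary infimum and supremum; $x\le y\vdash_{x,y,t}t+x\le t+y$; $\top\vdash u\ge0$; $x\ge0\vdash_x\bigvee_{n\in\mathbb{N}}x\le nu$. Provability is in geometric logic (formulae built from atomic ones using finite conjunctions, arbitrary disjunctions and existential quantification). A geometric sentence is a geometric formula with no free variables. *)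

theory Defs
  imports Main
begin

datatype trm = Var nat | Zero | U | Plus trm trm | Neg trm | Sup trm trm | Inf trm trm

text \<open>Geometric formulas; arbitrary disjunctions are indexed by subsets of the type 'i.
  Disj I F denotes the disjunction of the F i for i in I (empty I gives falsity).
  Ex binds the de Bruijn variable 0.\<close>
datatype 'i fm = Eq trm trm | Le trm trm | Top | Conj "'i fm" "'i fm"
  | Disj "'i set" "'i \<Rightarrow> 'i fm" | Ex "'i fm"

primrec trm_subst :: "(nat \<Rightarrow> trm) \<Rightarrow> trm \<Rightarrow> trm" where
  "trm_subst s (Var n) = s n"
| "trm_subst s Zero = Zero"
| "trm_subst s U = U"
| "trm_subst s (Plus a b) = Plus (trm_subst s a) (trm_subst s b)"
| "trm_subst s (Neg a) = Neg (trm_subst s a)"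
| "trm_subst s (Sup a b) = Sup (trm_subst s a) (trm_subst s b)"
| "trm_subst s (Inf a b) = Inf (trm_subst s a) (trm_subst s b)"

definition lift_subst :: "(nat \<Rightarrow> trm) \<Rightarrow> nat \<Rightarrow> trm" where
  "lift_subst s n = (case n of 0 \<Rightarrow> Var 0 | Suc m \<Rightarrow> trm_subst (\<lambda>k. Var (Suc k)) (s m))"

primrec fm_subst :: "(nat \<Rightarrow> trm) \<Rightarrow> 'i fm \<Rightarrow> 'i fm" where
  "fm_subst s (Eq a b) = Eq (trm_subst s a) (trm_subst s b)"
| "fm_subst s (Le a b) = Le (trm_subst s a) (trm_subst s b)"
| "fm_subst s Top = Top"
| "fm_subst s (Conj p q) = Conj (fm_subst s p) (fm_subst s q)"
| "fm_subst s (Disj I F) = Disj I (\<lambda>i. fm_subst s (F i))"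
| "fm_subst s (Ex p) = Ex (fm_subst (lift_subst s) p)"

definition lift_fm :: "'i fm \<Rightarrow> 'i fm" where
  "lift_fm p = fm_subst (\<lambda>n. Var (Suc n)) p"

primrec trm_closed :: "nat \<Rightarrow> trm \<Rightarrow> bool" where
  "trm_closed k (Var n) = (n < k)"
| "trm_closed k Zero = True"
| "trm_closed k U = True"
| "trm_closed k (Plus a b) = (trm_closed k a \<and> trm_closed k b)"
| "trm_closed k (Neg a) = trm_closed k a"
| "trm_closed k (Sup a b) = (trm_closed k a \<and> trm_closed k b)"
| "trm_closed k (Inf a b) = (trm_closed k a \<and> trm_closed k b)"

primrec fm_closed :: "nat \<Rightarrow> 'i fm \<Rightarrow> bool" where
  "fm_closed k (Eq a b) = (trm_closed k a \<and> trm_closed k b)"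
| "fm_closed k (Le a b) = (trm_closed k a \<and> trm_closed k b)"
| "fm_closed k Top = True"
| "fm_closed k (Conj p q) = (fm_closed k p \<and> fm_closed k q)"
| "fm_closed k (Disj I F) = (\<forall>i\<in>I. fm_closed k (F i))"
| "fm_closed k (Ex p) = fm_closed (Suc k) p"

definition sentence :: "'i fm \<Rightarrow> bool" where
  "sentence p = fm_closed 0 p"

primrec nu :: "nat \<Rightarrow> trm" where
  "nu 0 = Zero"
| "nu (Suc n) = Plus (nu n) U"

abbreviation "vx \<equiv> Var 0"
abbreviation "vy \<equiv> Var 1"
abbreviation "vz \<equiv> Var 2"

text \<open>Axioms of L_u, as sequents (antecedent, consequent).\<close>
inductive Lu_ax :: "'i fm \<Rightarrow> 'i fm \<Rightarrow> bool" where
  ax_assoc: "Lu_ax Top (Eq (Plus (Plus vx vy) vz) (Plus vx (Plus vy vz)))"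
| ax_comm: "Lu_ax Top (Eq (Plus vx vy) (Plus vy vx))"
| ax_zero: "Lu_ax Top (Eq (Plus vx Zero) vx)"
| ax_neg: "Lu_ax Top (Eq (Plus vx (Neg vx)) Zero)"
| ax_refl: "Lu_ax Top (Le vx vx)"
| ax_trans: "Lu_ax (Conj (Le vx vy) (Le vy vz)) (Le vx vz)"
| ax_antisym: "Lu_ax (Conj (Le vx vy) (Le vy vx)) (Eq vx vy)"
| ax_inf1: "Lu_ax Top (Le (Inf vx vy) vx)"
| ax_inf2: "Lu_ax Top (Le (Inf vx vy) vy)"
| ax_inf3: "Lu_ax (Conj (Le vz vx) (Le vz vy)) (Le vz (Inf vx vy))"
| ax_sup1: "Lu_ax Top (Le vx (Sup vx vy))"
| ax_sup2: "Lu_ax Top (Le vy (Sup vx vy))"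
| ax_sup3: "Lu_ax (Conj (Le vx vz) (Le vy vz)) (Le (Sup vx vy) vz)"
| ax_transl: "Lu_ax (Le vx vy) (Le (Plus vz vx) (Plus vz vy))"
| ax_unit_pos: "Lu_ax Top (Le Zero U)"
| ax_strong_unit: "F ` I = range (\<lambda>n. Le vx (nu n)) \<Longrightarrow> Lu_ax (Le Zero vx) (Disj I F)"

text \<open>Derivability in geometric logic (Johnstone, Elephant D1.3.1) from the axioms of L_u.
  Sequents carry no explicit context: every structure has nonempty carrier (it contains 0).\<close>
inductive Lu_prov :: "'i fm \<Rightarrow> 'i fm \<Rightarrow> bool" where
  axiom: "Lu_ax p q \<Longrightarrow> Lu_prov p q"
| ident: "Lu_prov p p"
| cut: "Lu_prov p q \<Longrightarrow> Lu_prov q r \<Longrightarrow> Lu_prov p r"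
| subst: "Lu_prov p q \<Longrightarrow> Lu_prov (fm_subst s p) (fm_subst s q)"
| eq_refl: "Lu_prov Top (Eq vx vx)"
| eq_subst: "Lu_prov (Conj (Eq (Var x) (Var y)) p) (fm_subst (Var(x := Var y)) p)"
| top_intro: "Lu_prov p Top"
| conj_e1: "Lu_prov (Conj p q) p"
| conj_e2: "Lu_prov (Conj p q) q"
| conj_i: "Lu_prov p q \<Longrightarrow> Lu_prov p r \<Longrightarrow> Lu_prov p (Conj q r)"
| disj_i: "i \<in> I \<Longrightarrow> Lu_prov (F i) (Disj I F)"
| disj_e: "(\<And>i. i \<in> I \<Longrightarrow> Lu_prov (F i) q) \<Longrightarrow> Lu_prov (Disj I F) q"
| ex_e: "Lu_prov p (lift_fm q) \<Longrightarrow> Lu_prov (Ex p) q"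
| ex_i: "Lu_prov (Ex p) q \<Longrightarrow> Lu_prov p (lift_fm q)"
| distrib: "Lu_prov (Conj p (Disj I F)) (Disj I (\<lambda>i. Conj p (F i)))"
| frobenius: "Lu_prov (Conj p (Ex q)) (Ex (Conj (lift_fm p) q))"

record 'a lstr =
  l_carrier :: "'a set"
  l_zero :: 'a
  l_unit :: 'a
  l_add :: "'a \<Rightarrow> 'a \<Rightarrow> 'a"
  l_neg :: "'a \<Rightarrow> 'a"
  l_sup :: "'a \<Rightarrow> 'a \<Rightarrow> 'a"
  l_inf :: "'a \<Rightarrow> 'a \<Rightarrow> 'a"
  l_le :: "'a \<Rightarrow> 'a \<Rightarrow> bool"

definition l_nu :: "('a, 'b) lstr_scheme \<Rightarrow> nat \<Rightarrow> 'a" where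
  "l_nu M n = ((\<lambda>x. l_add M x (l_unit M)) ^^ n) (l_zero M)"

definition unital_lgroup :: "('a, 'b) lstr_scheme \<Rightarrow> bool" where
  "unital_lgroup M \<longleftrightarrow>
    (let C = l_carrier M; z = l_zero M; u = l_unit M; pl = l_add M; ng = l_neg M;
         sp = l_sup M; nf = l_inf M; le = l_le M in
     z \<in> C \<and> u \<in> C \<and>
     (\<forall>x\<in>C. \<forall>y\<in>C. pl x y \<in> C \<and> sp x y \<in> C \<and> nf x y \<in> C) \<and> (\<forall>x\<in>C. ng x \<in> C) \<and>
     \<comment> \<open>abelian group\<close>
     (\<forall>x\<in>C. \<forall>y\<in>C. \<forall>w\<in>C. pl (pl x y) w = pl x (pl y w)) \<and>
     (\<forall>x\<in>C. \<forall>y\<in>C. pl x y = pl y x) \<and>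
     (\<forall>x\<in>C. pl x z = x) \<and> (\<forall>x\<in>C. pl x (ng x) = z) \<and>
     \<comment> \<open>partial order\<close>
     (\<forall>x\<in>C. le x x) \<and>
     (\<forall>x\<in>C. \<forall>y\<in>C. \<forall>w\<in>C. le x y \<and> le y w \<longrightarrow> le x w) \<and>
     (\<forall>x\<in>C. \<forall>y\<in>C. le x y \<and> le y x \<longrightarrow> x = y) \<and>
     \<comment> \<open>binary supremum and infimum\<close>
     (\<forall>x\<in>C. \<forall>y\<in>C. le x (sp x y) \<and> le y (sp x y) \<and>
        (\<forall>w\<in>C. le x w \<and> le y w \<longrightarrow> le (sp x y) w)) \<and>
     (\<forall>x\<in>C. \<forall>y\<in>C. le (nf x y) x \<and> le (nf x y) y \<and>
        (\<forall>w\<in>C. le w x \<and> le w y \<longrightarrow> le w (nf x y))) \<and>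
     \<comment> \<open>translation invariance\<close>
     (\<forall>x\<in>C. \<forall>y\<in>C. \<forall>t\<in>C. le x y \<longrightarrow> le (pl t x) (pl t y)) \<and>
     \<comment> \<open>strong unit\<close>
     le z u \<and> (\<forall>x\<in>C. le z x \<longrightarrow> (\<exists>n. le x (l_nu M n))))"

primrec eval :: "('a, 'b) lstr_scheme \<Rightarrow> (nat \<Rightarrow> 'a) \<Rightarrow> trm \<Rightarrow> 'a" where
  "eval M v (Var n) = v n"
| "eval M v Zero = l_zero M"
| "eval M v U = l_unit M"
| "eval M v (Plus a b) = l_add M (eval M v a) (eval M v b)"
| "eval M v (Neg a) = l_neg M (eval M v a)"
| "eval M v (Sup a b) = l_sup M (eval M v a) (eval M v b)"
| "eval M v (Inf a b) = l_inf M (eval M v a) (eval M v b)"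

definition cons_val :: "'a \<Rightarrow> (nat \<Rightarrow> 'a) \<Rightarrow> nat \<Rightarrow> 'a" where
  "cons_val a v n = (case n of 0 \<Rightarrow> a | Suc m \<Rightarrow> v m)"

primrec sat :: "('a, 'b) lstr_scheme \<Rightarrow> (nat \<Rightarrow> 'a) \<Rightarrow> 'i fm \<Rightarrow> bool" where
  "sat M v (Eq a b) = (eval M v a = eval M v b)"
| "sat M v (Le a b) = l_le M (eval M v a) (eval M v b)"
| "sat M v Top = True"
| "sat M v (Conj p q) = (sat M v p \<and> sat M v q)"
| "sat M v (Disj I F) = (\<exists>i\<in>I. sat M v (F i))"
| "sat M v (Ex p) = (\<exists>a\<in>l_carrier M. sat M (cons_val a v) p)"

definition valid_in :: "('a, 'b) lstr_scheme \<Rightarrow> 'i fm \<Rightarrow> 'i fm \<Rightarrow> bool" where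
  "valid_in M p q \<longleftrightarrow> (\<forall>v. (\<forall>n. v n \<in> l_carrier M) \<longrightarrow> sat M v p \<longrightarrow> sat M v q)"

end

theory Submission
  imports Defs "HOL-Library.Countable"
begin


instance trm :: countable by countable_datatype

definition comp_s :: "(nat\<Rightarrow>trm) \<Rightarrow> (nat\<Rightarrow>trm) \<Rightarrow> nat\<Rightarrow>trm" where
  "comp_s \<tau> \<sigma> n = trm_subst \<tau> (\<sigma> n)"

lemma trm_subst_comp: "trm_subst \<tau> (trm_subst \<sigma> t) = trm_subst (comp_s \<tau> \<sigma>) t"
  by (induction t) (auto simp: comp_s_def)

lemma lift_subst_comp: "lift_subst (comp_s \<tau> \<sigma>) = comp_s (lift_subst \<tau>) (lift_subst \<sigma>)"
proof
  fix n show "lift_subst (comp_s \<tau> \<sigma>) n = comp_s (lift_subst \<tau>) (lift_subst \<sigma>) n"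
  proof (cases n)
    case 0 then show ?thesis by (simp add: lift_subst_def comp_s_def)
  next
    case (Suc m)
    have "comp_s (lift_subst \<tau>) (\<lambda>k. Var (Suc k)) = comp_s (\<lambda>k. Var (Suc k)) \<tau>"
      by (auto simp: comp_s_def lift_subst_def)
    then show ?thesis using Suc
      by (simp add: lift_subst_def comp_s_def trm_subst_comp)
  qed
qed

lemma fm_subst_comp: "fm_subst \<tau> (fm_subst \<sigma> p) = fm_subst (comp_s \<tau> \<sigma>) p"
  by (induction p arbitrary: \<sigma> \<tau>) (auto simp: trm_subst_comp lift_subst_comp)

lemma trm_subst_id[simp]: "trm_subst Var t = t"
  by (induction t) auto

lemma lift_subst_id[simp]: "lift_subst Var = Var"
  by (auto simp: lift_subst_def split: nat.split)

lemma fm_subst_id[simp]: "fm_subst Var p = p"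
  by (induction p) auto

lemma eval_subst: "eval M v (trm_subst s t) = eval M (\<lambda>n. eval M v (s n)) t"
  by (induction t) auto

lemma sat_subst: "sat M v (fm_subst s p) = sat M (\<lambda>n. eval M v (s n)) p"
proof (induction p arbitrary: v s)
  case (Ex p)
  have "\<And>a. (\<lambda>n. eval M (cons_val a v) (lift_subst s n)) = cons_val a (\<lambda>n. eval M v (s n))"
  proof
    fix a n show "eval M (cons_val a v) (lift_subst s n) = cons_val a (\<lambda>n. eval M v (s n)) n"
      by (cases n) (auto simp: lift_subst_def cons_val_def eval_subst)
  qed
  then show ?case using Ex by simp
qed (auto simp: eval_subst)

definition shk :: "nat \<Rightarrow> 'i fm \<Rightarrow> 'i fm" where
  "shk k p = fm_subst (\<lambda>n. Var (n + k)) p"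

lemma lift_shk: "lift_fm p = shk 1 p"
  by (simp add: lift_fm_def shk_def)

lemma shk0[simp]: "shk 0 p = p"
  by (simp add: shk_def)

lemma shk_shk: "shk j (shk k p) = shk (k + j) p"
proof -
  have "comp_s (\<lambda>n. Var (n + j)) (\<lambda>n. Var (n + k)) = (\<lambda>n. Var (n + (k + j)))"
    by (auto simp: comp_s_def add.assoc)
  then show ?thesis by (simp add: shk_def fm_subst_comp)
qed

lemma shk_simps[simp]: "shk k (Conj p q) = Conj (shk k p) (shk k q)" "shk k Top = Top"
  "shk k (Disj I F) = Disj I (\<lambda>i. shk k (F i))"
  by (auto simp: shk_def)

lemma shk_subst: "shk k (fm_subst \<sigma> p) = fm_subst (comp_s (\<lambda>n. Var (n + k)) \<sigma>) p"
  by (simp add: shk_def fm_subst_comp)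


lemma eval_nu: "eval M v (nu n) = l_nu M n"
  by (induction n) (auto simp: l_nu_def)

lemma UL_conj: "unital_lgroup M \<Longrightarrow> 
     l_zero M \<in> l_carrier M \<and> l_unit M \<in> l_carrier M \<and>
     (\<forall>x\<in>l_carrier M. \<forall>y\<in>l_carrier M. l_add M x y \<in> l_carrier M \<and> l_sup M x y \<in> l_carrier M \<and> l_inf M x y \<in> l_carrier M) \<and> (\<forall>x\<in>l_carrier M. l_neg M x \<in> l_carrier M) \<and>
     (\<forall>x\<in>l_carrier M. \<forall>y\<in>l_carrier M. \<forall>w\<in>l_carrier M. l_add M (l_add M x y) w = l_add M x (l_add M y w)) \<and>
     (\<forall>x\<in>l_carrier M. \<forall>y\<in>l_carrier M. l_add M x y = l_add M y x) \<and>
     (\<forall>x\<in>l_carrier M. l_add M x (l_zero M) = x) \<and> (\<forall>x\<in>l_carrier M. l_add M x (l_neg M x) = l_zero M) \<and>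
     (\<forall>x\<in>l_carrier M. l_le M x x) \<and>
     (\<forall>x\<in>l_carrier M. \<forall>y\<in>l_carrier M. \<forall>w\<in>l_carrier M. l_le M x y \<and> l_le M y w \<longrightarrow> l_le M x w) \<and>
     (\<forall>x\<in>l_carrier M. \<forall>y\<in>l_carrier M. l_le M x y \<and> l_le M y x \<longrightarrow> x = y) \<and>
     (\<forall>x\<in>l_carrier M. \<forall>y\<in>l_carrier M. l_le M x (l_sup M x y) \<and> l_le M y (l_sup M x y) \<and>
        (\<forall>w\<in>l_carrier M. l_le M x w \<and> l_le M y w \<longrightarrow> l_le M (l_sup M x y) w)) \<and>
     (\<forall>x\<in>l_carrier M. \<forall>y\<in>l_carrier M. l_le M (l_inf M x y) x \<and> l_le M (l_inf M x y) y \<and>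
        (\<forall>w\<in>l_carrier M. l_le M w x \<and> l_le M w y \<longrightarrow> l_le M w (l_inf M x y))) \<and>
     (\<forall>x\<in>l_carrier M. \<forall>y\<in>l_carrier M. \<forall>t\<in>l_carrier M. l_le M x y \<longrightarrow> l_le M (l_add M t x) (l_add M t y)) \<and>
     l_le M (l_zero M) (l_unit M) \<and> (\<forall>x\<in>l_carrier M. l_le M (l_zero M) x \<longrightarrow> (\<exists>n. l_le M x (l_nu M n)))"
  unfolding unital_lgroup_def Let_def by assumption

lemma UL1: assumes "unital_lgroup M" shows "l_zero M \<in> l_carrier M"
  using UL_conj[OF assms, THEN conjunct1] by blast

lemma UL2: assumes "unital_lgroup M" shows "l_unit M \<in> l_carrier M"
  using UL_conj[OF assms, THEN conjunct2, THEN conjunct1] by blast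

lemma UL3: assumes "unital_lgroup M" shows "\<And>x y. x \<in> l_carrier M \<Longrightarrow> y \<in> l_carrier M \<Longrightarrow> l_add M x y \<in> l_carrier M"
  using UL_conj[OF assms, THEN conjunct2, THEN conjunct2, THEN conjunct1] by blast

lemma UL4: assumes "unital_lgroup M" shows "\<And>x y. x \<in> l_carrier M \<Longrightarrow> y \<in> l_carrier M \<Longrightarrow> l_sup M x y \<in> l_carrier M"
  using UL_conj[OF assms, THEN conjunct2, THEN conjunct2, THEN conjunct1] by blast

lemma UL5: assumes "unital_lgroup M" shows "\<And>x y. x \<in> l_carrier M \<Longrightarrow> y \<in> l_carrier M \<Longrightarrow> l_inf M x y \<in> l_carrier M"
  using UL_conj[OF assms, THEN conjunct2, THEN conjunct2, THEN conjunct1] by blast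

lemma UL6: assumes "unital_lgroup M" shows "\<And>x. x \<in> l_carrier M \<Longrightarrow> l_neg M x \<in> l_carrier M"
  using UL_conj[OF assms, THEN conjunct2, THEN conjunct2, THEN conjunct2, THEN conjunct1] by blast

lemma UL7: assumes "unital_lgroup M" shows "\<And>x y w. x \<in> l_carrier M \<Longrightarrow> y \<in> l_carrier M \<Longrightarrow> w \<in> l_carrier M \<Longrightarrow> l_add M (l_add M x y) w = l_add M x (l_add M y w)"
  using UL_conj[OF assms, THEN conjunct2, THEN conjunct2, THEN conjunct2, THEN conjunct2, THEN conjunct1] by blast

lemma UL8: assumes "unital_lgroup M" shows "\<And>x y. x \<in> l_carrier M \<Longrightarrow> y \<in> l_carrier M \<Longrightarrow> l_add M x y = l_add M y x"
  using UL_conj[OF assms, THEN conjunct2, THEN conjunct2, THEN conjunct2, THEN conjunct2, THEN conjunct2, THEN conjunct1] by blast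

lemma UL9: assumes "unital_lgroup M" shows "\<And>x. x \<in> l_carrier M \<Longrightarrow> l_add M x (l_zero M) = x"
  using UL_conj[OF assms, THEN conjunct2, THEN conjunct2, THEN conjunct2, THEN conjunct2, THEN conjunct2, THEN conjunct2, THEN conjunct1] by blast

lemma UL10: assumes "unital_lgroup M" shows "\<And>x. x \<in> l_carrier M \<Longrightarrow> l_add M x (l_neg M x) = l_zero M"
  using UL_conj[OF assms, THEN conjunct2, THEN conjunct2, THEN conjunct2, THEN conjunct2, THEN conjunct2, THEN conjunct2, THEN conjunct2, THEN conjunct1] by blast

lemma UL11: assumes "unital_lgroup M" shows "\<And>x. x \<in> l_carrier M \<Longrightarrow> l_le M x x"
  using UL_conj[OF assms, THEN conjunct2, THEN conjunct2, THEN conjunct2, THEN conjunct2, THEN conjunct2, THEN conjunct2, THEN conjunct2, THEN conjunct2, THEN conjunct1] by blast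

lemma UL12: assumes "unital_lgroup M" shows "\<And>x y w. x \<in> l_carrier M \<Longrightarrow> y \<in> l_carrier M \<Longrightarrow> w \<in> l_carrier M \<Longrightarrow> l_le M x y \<Longrightarrow> l_le M y w \<Longrightarrow> l_le M x w"
  using UL_conj[OF assms, THEN conjunct2, THEN conjunct2, THEN conjunct2, THEN conjunct2, THEN conjunct2, THEN conjunct2, THEN conjunct2, THEN conjunct2, THEN conjunct2, THEN conjunct1] by blast

lemma UL13: assumes "unital_lgroup M" shows "\<And>x y. x \<in> l_carrier M \<Longrightarrow> y \<in> l_carrier M \<Longrightarrow> l_le M x y \<Longrightarrow> l_le M y x \<Longrightarrow> x = y"
  using UL_conj[OF assms, THEN conjunct2, THEN conjunct2, THEN conjunct2, THEN conjunct2, THEN conjunct2, THEN conjunct2, THEN conjunct2, THEN conjunct2, THEN conjunct2, THEN conjunct2, THEN conjunct1] by blast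

lemma UL14: assumes "unital_lgroup M" shows "\<And>x y. x \<in> l_carrier M \<Longrightarrow> y \<in> l_carrier M \<Longrightarrow> l_le M x (l_sup M x y)"
  using UL_conj[OF assms, THEN conjunct2, THEN conjunct2, THEN conjunct2, THEN conjunct2, THEN conjunct2, THEN conjunct2, THEN conjunct2, THEN conjunct2, THEN conjunct2, THEN conjunct2, THEN conjunct2, THEN conjunct1] by blast

lemma UL15: assumes "unital_lgroup M" shows "\<And>x y. x \<in> l_carrier M \<Longrightarrow> y \<in> l_carrier M \<Longrightarrow> l_le M y (l_sup M x y)"
  using UL_conj[OF assms, THEN conjunct2, THEN conjunct2, THEN conjunct2, THEN conjunct2, THEN conjunct2, THEN conjunct2, THEN conjunct2, THEN conjunct2, THEN conjunct2, THEN conjunct2, THEN conjunct2, THEN conjunct1] by blast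

lemma UL16: assumes "unital_lgroup M" shows "\<And>x y w. x \<in> l_carrier M \<Longrightarrow> y \<in> l_carrier M \<Longrightarrow> w \<in> l_carrier M \<Longrightarrow> l_le M x w \<Longrightarrow> l_le M y w \<Longrightarrow> l_le M (l_sup M x y) w"
  using UL_conj[OF assms, THEN conjunct2, THEN conjunct2, THEN conjunct2, THEN conjunct2, THEN conjunct2, THEN conjunct2, THEN conjunct2, THEN conjunct2, THEN conjunct2, THEN conjunct2, THEN conjunct2, THEN conjunct1] by blast

lemma UL17: assumes "unital_lgroup M" shows "\<And>x y. x \<in> l_carrier M \<Longrightarrow> y \<in> l_carrier M \<Longrightarrow> l_le M (l_inf M x y) x"
  using UL_conj[OF assms, THEN conjunct2, THEN conjunct2, THEN conjunct2, THEN conjunct2, THEN conjunct2, THEN conjunct2, THEN conjunct2, THEN conjunct2, THEN conjunct2, THEN conjunct2, THEN conjunct2, THEN conjunct2, THEN conjunct1] by blast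

lemma UL18: assumes "unital_lgroup M" shows "\<And>x y. x \<in> l_carrier M \<Longrightarrow> y \<in> l_carrier M \<Longrightarrow> l_le M (l_inf M x y) y"
  using UL_conj[OF assms, THEN conjunct2, THEN conjunct2, THEN conjunct2, THEN conjunct2, THEN conjunct2, THEN conjunct2, THEN conjunct2, THEN conjunct2, THEN conjunct2, THEN conjunct2, THEN conjunct2, THEN conjunct2, THEN conjunct1] by blast

lemma UL19: assumes "unital_lgroup M" shows "\<And>x y w. x \<in> l_carrier M \<Longrightarrow> y \<in> l_carrier M \<Longrightarrow> w \<in> l_carrier M \<Longrightarrow> l_le M w x \<Longrightarrow> l_le M w y \<Longrightarrow> l_le M w (l_inf M x y)"
  using UL_conj[OF assms, THEN conjunct2, THEN conjunct2, THEN conjunct2, THEN conjunct2, THEN conjunct2, THEN conjunct2, THEN conjunct2, THEN conjunct2, THEN conjunct2, THEN conjunct2, THEN conjunct2, THEN conjunct2, THEN conjunct1] by blast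

lemma UL20: assumes "unital_lgroup M" shows "\<And>x y t. x \<in> l_carrier M \<Longrightarrow> y \<in> l_carrier M \<Longrightarrow> t \<in> l_carrier M \<Longrightarrow> l_le M x y \<Longrightarrow> l_le M (l_add M t x) (l_add M t y)"
  using UL_conj[OF assms, THEN conjunct2, THEN conjunct2, THEN conjunct2, THEN conjunct2, THEN conjunct2, THEN conjunct2, THEN conjunct2, THEN conjunct2, THEN conjunct2, THEN conjunct2, THEN conjunct2, THEN conjunct2, THEN conjunct2, THEN conjunct1] by blast

lemma UL21: assumes "unital_lgroup M" shows "l_le M (l_zero M) (l_unit M)"
  using UL_conj[OF assms, THEN conjunct2, THEN conjunct2, THEN conjunct2, THEN conjunct2, THEN conjunct2, THEN conjunct2, THEN conjunct2, THEN conjunct2, THEN conjunct2, THEN conjunct2, THEN conjunct2, THEN conjunct2, THEN conjunct2, THEN conjunct2, THEN conjunct1] by blast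

lemma UL22: assumes "unital_lgroup M" shows "\<And>x. x \<in> l_carrier M \<Longrightarrow> l_le M (l_zero M) x \<Longrightarrow> \<exists>n. l_le M x (l_nu M n)"
  using UL_conj[OF assms, THEN conjunct2, THEN conjunct2, THEN conjunct2, THEN conjunct2, THEN conjunct2, THEN conjunct2, THEN conjunct2, THEN conjunct2, THEN conjunct2, THEN conjunct2, THEN conjunct2, THEN conjunct2, THEN conjunct2, THEN conjunct2, THEN conjunct2] by blast

lemmas UL = UL1 UL2 UL3 UL4 UL5 UL6 UL7 UL8 UL9 UL10 UL11 UL12 UL13 UL14 UL15 UL16 UL17 UL18 UL19 UL20 UL21 UL22



lemma eval_carrier: "unital_lgroup M \<Longrightarrow> (\<forall>n. v n \<in> l_carrier M) \<Longrightarrow> eval M v t \<in> l_carrier M"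
  by (induction t) (auto simp: UL)


lemma ax_sound: "Lu_ax p q \<Longrightarrow> unital_lgroup M \<Longrightarrow> (\<forall>n. v n \<in> l_carrier M) \<Longrightarrow> sat M v p \<Longrightarrow> sat M v q"
proof (induction rule: Lu_ax.induct)
  case (ax_strong_unit F I)
  then obtain n where "l_le M (v 0) (l_nu M n)"
    using UL(22)[of M "v 0"] by auto
  moreover have "Le vx (nu n) \<in> F ` I" using ax_strong_unit(1) by auto
  moreover from calculation obtain i where "i \<in> I" "F i = Le vx (nu n)" by auto
  ultimately have "sat M v (F i)" by (simp add: eval_nu)
  then show ?case using \<open>i \<in> I\<close> by auto
next
  case ax_assoc
  then show ?case using UL(7)[OF \<open>unital_lgroup M\<close>] by (simp; blast?)
next
  case ax_comm
  then show ?case using UL(8)[OF \<open>unital_lgroup M\<close>] by (simp; blast?)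
next
  case ax_zero
  then show ?case using UL(9)[OF \<open>unital_lgroup M\<close>] by (simp; blast?)
next
  case ax_neg
  then show ?case using UL(10)[OF \<open>unital_lgroup M\<close>] by (simp; blast?)
next
  case ax_refl
  then show ?case using UL(11)[OF \<open>unital_lgroup M\<close>] by (simp; blast?)
next
  case ax_trans
  then show ?case using UL(12)[OF \<open>unital_lgroup M\<close>] by (simp; blast?)
next
  case ax_antisym
  then show ?case using UL(13)[OF \<open>unital_lgroup M\<close>] by (simp; blast?)
next
  case ax_inf1
  then show ?case using UL(17)[OF \<open>unital_lgroup M\<close>] by (simp; blast?)
next
  case ax_inf2
  then show ?case using UL(18)[OF \<open>unital_lgroup M\<close>] by (simp; blast?)
next
  case ax_inf3
  then show ?case using UL(19)[OF \<open>unital_lgroup M\<close>] by (simp; blast?)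
next
  case ax_sup1
  then show ?case using UL(14)[OF \<open>unital_lgroup M\<close>] by (simp; blast?)
next
  case ax_sup2
  then show ?case using UL(15)[OF \<open>unital_lgroup M\<close>] by (simp; blast?)
next
  case ax_sup3
  then show ?case using UL(16)[OF \<open>unital_lgroup M\<close>] by (simp; blast?)
next
  case ax_transl
  then show ?case using UL(20)[OF \<open>unital_lgroup M\<close>] by (simp; blast?)
next
  case ax_unit_pos
  then show ?case using UL(21)[OF \<open>unital_lgroup M\<close>] by (simp; blast?)
qed

lemma cons_val_Suc[simp]: "(\<lambda>n. cons_val a v (Suc n)) = v"
  by (simp add: cons_val_def)


lemma prov_sound: "Lu_prov p q \<Longrightarrow> unital_lgroup M \<Longrightarrow> (\<forall>n. v n \<in> l_carrier M) \<Longrightarrow> sat M v p \<Longrightarrow> sat M v q"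
proof (induction arbitrary: v rule: Lu_prov.induct)
  case (axiom p q) then show ?case using ax_sound by blast
next
  case (subst p q s)
  then show ?case by (auto simp: sat_subst eval_carrier)
next
  case (eq_subst x y p)
  then have "(\<lambda>n. eval M v ((Var(x := Var y)) n)) = v" by auto
  then show ?case using eq_subst by (auto simp: sat_subst)
next
  case (ex_e p q)
  then obtain a where a: "a \<in> l_carrier M" "sat M (cons_val a v) p" by auto
  have "\<forall>n. cons_val a v n \<in> l_carrier M" using a ex_e.prems by (simp add: cons_val_def split: nat.split)
  then show ?case using ex_e.IH[of "cons_val a v"] a ex_e.prems by (simp add: lift_fm_def sat_subst)
next
  case (ex_i p q)
  have "sat M (\<lambda>n. v (Suc n)) (fm.Ex p)"
  proof -
    have "cons_val (v 0) (\<lambda>n. v (Suc n)) = v" by (auto simp: cons_val_def split: nat.split)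
    then show ?thesis using ex_i.prems by (auto intro!: bexI[of _ "v 0"])
  qed
  then have "sat M (\<lambda>n. v (Suc n)) q" using ex_i by auto
  then show ?case by (simp add: lift_fm_def sat_subst)
next
  case (frobenius p q)
  then show ?case by (auto simp: lift_fm_def sat_subst)
qed auto


lemma prov_cut: "Lu_prov p q \<Longrightarrow> Lu_prov q r \<Longrightarrow> Lu_prov p r" by (rule cut)

lemma conj_mono: "Lu_prov a a' \<Longrightarrow> Lu_prov b b' \<Longrightarrow> Lu_prov (Conj a b) (Conj a' b')"
  by (meson conj_i conj_e1 conj_e2 cut)

lemma conj_swap: "Lu_prov (Conj a b) (Conj b a)"
  by (meson conj_i conj_e1 conj_e2)

lemma fm_subst_Top[simp]: "fm_subst s Top = Top" by simp

lemma prov_top_subst: "Lu_prov Top q \<Longrightarrow> Lu_prov Top (fm_subst s q)"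
  using subst[of Top q s] by simp

lemma ex_intro: "Lu_prov (fm_subst (case_nat t Var) p) (fm.Ex p)"
proof -
  have "Lu_prov p (lift_fm (fm.Ex p))" by (rule ex_i[OF ident])
  from subst[OF this, of "case_nat t Var"]
  have "Lu_prov (fm_subst (case_nat t Var) p) (fm_subst (comp_s (case_nat t Var) (\<lambda>n. Var (Suc n))) (fm.Ex p))"
    by (simp add: lift_fm_def fm_subst_comp del: fm_subst.simps)
  moreover have "comp_s (case_nat t Var) (\<lambda>n. Var (Suc n)) = Var"
    by (auto simp: comp_s_def)
  ultimately show ?thesis by simp
qed

lemma leib: "Lu_prov (Conj (Eq a b) (fm_subst (s(0:=a)) \<phi>)) (fm_subst (s(0:=b)) \<phi>)"
proof -
  define p where "p = fm_subst (\<lambda>n. if n = 0 then Var 0 else Var (Suc n)) \<phi>"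
  have "Lu_prov (Conj (Eq (Var 0) (Var 1)) p) (fm_subst (Var(0 := Var 1)) p)"
    by (rule eq_subst)
  from subst[OF this, of "\<lambda>n. if n = 0 then a else if n = 1 then b else s (n - 1)"]
  have "Lu_prov (Conj (Eq a b) (fm_subst (comp_s (\<lambda>n. if n = 0 then a else if n = 1 then b else s (n - 1))
        (\<lambda>n. if n = 0 then Var 0 else Var (Suc n))) \<phi>))
     (fm_subst (comp_s (\<lambda>n. if n = 0 then a else if n = 1 then b else s (n - 1))
       (comp_s (Var(0 := Var 1)) (\<lambda>n. if n = 0 then Var 0 else Var (Suc n)))) \<phi>)"
    by (simp add: p_def fm_subst_comp)
  moreover have "comp_s (\<lambda>n. if n = 0 then a else if n = 1 then b else s (n - 1))
        (\<lambda>n. if n = 0 then Var 0 else Var (Suc n)) = s(0:=a)"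
    by (auto simp: comp_s_def)
  moreover have "comp_s (\<lambda>n. if n = 0 then a else if n = 1 then b else s (n - 1))
       (comp_s (Var(0 := Var 1)) (\<lambda>n. if n = 0 then Var 0 else Var (Suc n))) = s(0:=b)"
    by (auto simp: comp_s_def)
  ultimately show ?thesis by simp
qed


definition sl :: "trm list \<Rightarrow> nat \<Rightarrow> trm" where
  "sl xs n = (if n < length xs then xs ! n else Zero)"

lemma sl_simps[simp]: "sl (a # xs) 0 = a" "sl (a # xs) (Suc n) = sl xs n" "sl [] n = Zero"
  "sl (a # xs) (numeral k) = sl xs (pred_numeral k)"
  by (auto simp: sl_def numeral_eq_Suc)

lemma sl_upd: "(sl (c # xs))(0 := a) = sl (a # xs)"
  by (auto simp: sl_def nth_Cons split: nat.split)

locale thy =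
  fixes D :: "'i fm \<Rightarrow> bool"
  assumes D_mp: "D \<phi> \<Longrightarrow> Lu_prov \<phi> \<psi> \<Longrightarrow> D \<psi>"
    and D_conj: "D \<phi> \<Longrightarrow> D \<psi> \<Longrightarrow> D (Conj \<phi> \<psi>)"
    and D_top: "D Top"
    and D_bnd: "\<And>t. \<exists>n. D (Le (trm.Sup t Zero) (nu n))"
begin

lemma D_prov: "Lu_prov Top \<psi> \<Longrightarrow> D \<psi>"
  using D_mp D_top by blast

lemma D_ax0: "Lu_ax Top \<psi> \<Longrightarrow> D (fm_subst s \<psi>)"
  using D_prov prov_top_subst axiom by blast

lemma D_ax1: "Lu_ax X \<psi> \<Longrightarrow> D (fm_subst s X) \<Longrightarrow> D (fm_subst s \<psi>)"
  using D_mp subst axiom by blast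

lemma D_ax2: "Lu_ax (Conj X Y) \<psi> \<Longrightarrow> D (fm_subst s X) \<Longrightarrow> D (fm_subst s Y) \<Longrightarrow> D (fm_subst s \<psi>)"
  using D_ax1[of "Conj X Y" \<psi> s] D_conj by simp

lemma D_leib: "D (Eq a b) \<Longrightarrow> D (fm_subst (sl (a # xs)) \<phi>) \<Longrightarrow> D (fm_subst (sl (b # xs)) \<phi>)"
  using leib[of a b "sl (a # xs)" \<phi>] D_conj D_mp unfolding sl_upd by blast

lemma eqv_refl: "D (Eq a a)"
  using D_prov[OF prov_top_subst[OF eq_refl, of "sl [a]"]] by simp

lemma eqv_sym: "D (Eq a b) \<Longrightarrow> D (Eq b a)"
  using D_leib[of a b "[a]" "Eq (Var 0) (Var 1)"] eqv_refl by simp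

lemma eqv_trans: "D (Eq a b) \<Longrightarrow> D (Eq b c) \<Longrightarrow> D (Eq a c)"
  using D_leib[of b c "[a]" "Eq (Var 1) (Var 0)"] by simp

lemma cong_Plus: "D (Eq a a') \<Longrightarrow> D (Eq b b') \<Longrightarrow> D (Eq (Plus a b) (Plus a' b'))"
proof -
  assume 1: "D (Eq a a')" and 2: "D (Eq b b')"
  have "D (Eq (Plus a b) (Plus a' b))"
    using D_leib[OF 1, of "[a, b]" "Eq (Plus (Var 1) (Var 2)) (Plus (Var 0) (Var 2))"] eqv_refl by simp
  then show ?thesis
    using D_leib[OF 2, of "[a, b, a']" "Eq (Plus (Var 1) (Var 2)) (Plus (Var 3) (Var 0))"] by simp
qed

lemma cong_Sup: "D (Eq a a') \<Longrightarrow> D (Eq b b') \<Longrightarrow> D (Eq (trm.Sup a b) (trm.Sup a' b'))"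
proof -
  assume 1: "D (Eq a a')" and 2: "D (Eq b b')"
  have "D (Eq (trm.Sup a b) (trm.Sup a' b))"
    using D_leib[OF 1, of "[a, b]" "Eq (trm.Sup (Var 1) (Var 2)) (trm.Sup (Var 0) (Var 2))"] eqv_refl by simp
  then show ?thesis
    using D_leib[OF 2, of "[a, b, a']" "Eq (trm.Sup (Var 1) (Var 2)) (trm.Sup (Var 3) (Var 0))"] by simp
qed

lemma cong_Inf: "D (Eq a a') \<Longrightarrow> D (Eq b b') \<Longrightarrow> D (Eq (trm.Inf a b) (trm.Inf a' b'))"
proof -
  assume 1: "D (Eq a a')" and 2: "D (Eq b b')"
  have "D (Eq (trm.Inf a b) (trm.Inf a' b))"
    using D_leib[OF 1, of "[a, b]" "Eq (trm.Inf (Var 1) (Var 2)) (trm.Inf (Var 0) (Var 2))"] eqv_refl by simp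
  then show ?thesis
    using D_leib[OF 2, of "[a, b, a']" "Eq (trm.Inf (Var 1) (Var 2)) (trm.Inf (Var 3) (Var 0))"] by simp
qed

lemma cong_Neg: "D (Eq a a') \<Longrightarrow> D (Eq (Neg a) (Neg a'))"
  using D_leib[of a a' "[a]" "Eq (Neg (Var 1)) (Neg (Var 0))"] eqv_refl by simp

lemma cong_Le: "D (Eq a a') \<Longrightarrow> D (Eq b b') \<Longrightarrow> D (Le a b) \<Longrightarrow> D (Le a' b')"
proof -
  assume 1: "D (Eq a a')" and 2: "D (Eq b b')" and 3: "D (Le a b)"
  have "D (Le a' b)"
    using D_leib[OF 1, of "[b]" "Le (Var 0) (Var 1)"] 3 by simp
  then show ?thesis
    using D_leib[OF 2, of "[a']" "Le (Var 1) (Var 0)"] by simp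
qed

end


locale tm = thy D for D :: "'i fm \<Rightarrow> bool" +
  fixes enc :: "nat \<Rightarrow> 'a"
  assumes enc_inj: "inj enc"
begin

definition rep :: "trm \<Rightarrow> 'a" where
  "rep t = enc (LEAST k. D (Eq (from_nat k) t))"

definition pick :: "'a \<Rightarrow> trm" where
  "pick x = from_nat (inv enc x)"

lemma least_ex: "D (Eq (from_nat (LEAST k. D (Eq (from_nat k) t))) t)"
  by (rule LeastI[of _ "to_nat t"]) (simp add: eqv_refl)

lemma rep_eq: "rep a = rep b \<longleftrightarrow> D (Eq a b)"
proof
  assume "rep a = rep b"
  then have "(LEAST k. D (Eq (from_nat k) a)) = (LEAST k. D (Eq (from_nat k) b))"
    using enc_inj by (auto simp: rep_def inj_def)
  then show "D (Eq a b)" using least_ex[of a] least_ex[of b] eqv_sym eqv_trans by metis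
next
  assume "D (Eq a b)"
  then have "\<And>k. D (Eq (from_nat k) a) = D (Eq (from_nat k) b)"
    using eqv_sym eqv_trans by metis
  then show "rep a = rep b" by (simp add: rep_def)
qed

lemma pick_rep: "D (Eq (pick (rep t)) t)"
  using least_ex[of t] enc_inj by (simp add: pick_def rep_def)

lemma rep_pick: "rep (pick (rep t)) = rep t"
  using pick_rep rep_eq by blast

definition TM :: "'a lstr" where
  "TM = \<lparr> l_carrier = range rep, l_zero = rep Zero, l_unit = rep U,
     l_add = (\<lambda>x y. rep (Plus (pick x) (pick y))), l_neg = (\<lambda>x. rep (Neg (pick x))),
     l_sup = (\<lambda>x y. rep (trm.Sup (pick x) (pick y))), l_inf = (\<lambda>x y. rep (trm.Inf (pick x) (pick y))),
     l_le = (\<lambda>x y. D (Le (pick x) (pick y))) \<rparr>"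

lemma TM_simps[simp]:
  "l_carrier TM = range rep" "l_zero TM = rep Zero" "l_unit TM = rep U"
  "l_add TM (rep a) (rep b) = rep (Plus a b)"
  "l_neg TM (rep a) = rep (Neg a)"
  "l_sup TM (rep a) (rep b) = rep (trm.Sup a b)"
  "l_inf TM (rep a) (rep b) = rep (trm.Inf a b)"
  "l_le TM (rep a) (rep b) = D (Le a b)"
  by (auto simp: TM_def rep_eq intro: cong_Plus cong_Neg cong_Sup cong_Inf pick_rep
       intro: cong_Le[OF pick_rep pick_rep] cong_Le[OF eqv_sym[OF pick_rep] eqv_sym[OF pick_rep]])

lemma eval_rep: "eval TM (\<lambda>n. rep (\<sigma> n)) t = rep (trm_subst \<sigma> t)"
  by (induction t) auto

lemma nu_rep: "l_nu TM n = rep (nu n)"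
  by (induction n) (auto simp: l_nu_def)

lemma Dax0: "Lu_ax Top \<psi> \<Longrightarrow> D (fm_subst (sl xs) \<psi>)" by (rule D_ax0)

lemma TM_lgroup: "unital_lgroup TM"
proof -
  have ball: "\<And>P. (\<forall>x\<in>range rep. P x) = (\<forall>t. P (rep t))" by auto
  have assoc: "\<And>a b c. D (Eq (Plus (Plus a b) c) (Plus a (Plus b c)))"
    using Dax0[OF ax_assoc, of "[_,_,_]"] by simp
  have comm: "\<And>a b. D (Eq (Plus a b) (Plus b a))"
    using Dax0[OF ax_comm, of "[_,_]"] by simp
  have zero: "\<And>a. D (Eq (Plus a Zero) a)"
    using Dax0[OF ax_zero, of "[_]"] by simp
  have neg: "\<And>a. D (Eq (Plus a (Neg a)) Zero)"
    using Dax0[OF ax_neg, of "[_]"] by simp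
  have refl: "\<And>a. D (Le a a)"
    using Dax0[OF ax_refl, of "[_]"] by simp
  have trans: "\<And>a b c. D (Le a b) \<Longrightarrow> D (Le b c) \<Longrightarrow> D (Le a c)"
    using D_ax2[OF ax_trans, of "sl [_,_,_]"] by simp
  have antisym: "\<And>a b. D (Le a b) \<Longrightarrow> D (Le b a) \<Longrightarrow> D (Eq a b)"
    using D_ax2[OF ax_antisym, of "sl [_,_]"] by simp
  have inf1: "\<And>a b. D (Le (trm.Inf a b) a)"
    using Dax0[OF ax_inf1, of "[_,_]"] by simp
  have inf2: "\<And>a b. D (Le (trm.Inf a b) b)"
    using Dax0[OF ax_inf2, of "[_,_]"] by simp
  have inf3: "\<And>a b c. D (Le c a) \<Longrightarrow> D (Le c b) \<Longrightarrow> D (Le c (trm.Inf a b))"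
    using D_ax2[OF ax_inf3, of "sl [_,_,_]"] by simp
  have sup1: "\<And>a b. D (Le a (trm.Sup a b))"
    using Dax0[OF ax_sup1, of "[_,_]"] by simp
  have sup2: "\<And>a b. D (Le b (trm.Sup a b))"
    using Dax0[OF ax_sup2, of "[_,_]"] by simp
  have sup3: "\<And>a b c. D (Le a c) \<Longrightarrow> D (Le b c) \<Longrightarrow> D (Le (trm.Sup a b) c)"
    using D_ax2[OF ax_sup3, of "sl [_,_,_]"] by simp
  have transl: "\<And>a b c. D (Le a b) \<Longrightarrow> D (Le (Plus c a) (Plus c b))"
    using D_ax1[OF ax_transl, of "sl [_,_,_]"] by simp
  have upos: "D (Le Zero U)"
    using Dax0[OF ax_unit_pos, of "[]"] by simp
  have su: "\<And>t. D (Le Zero t) \<Longrightarrow> \<exists>n. D (Le t (nu n))"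
  proof -
    fix t assume "D (Le Zero t)"
    obtain n where "D (Le (trm.Sup t Zero) (nu n))" using D_bnd by blast
    then show "\<exists>n. D (Le t (nu n))" using trans[OF sup1] by blast
  qed
  show ?thesis
    unfolding unital_lgroup_def Let_def TM_simps(1) ball
    by (simp add: rep_eq nu_rep assoc comm zero neg refl inf1 inf2 inf3 sup1 sup2 sup3 transl upos su)
       (blast intro: trans antisym)
qed

lemma truth: "sat TM (\<lambda>n. rep (\<sigma> n)) r \<Longrightarrow> D (fm_subst \<sigma> r)"
proof (induction r arbitrary: \<sigma>)
  case (Eq a b) then show ?case by (simp add: eval_rep rep_eq)
next
  case (Le a b) then show ?case by (simp add: eval_rep)
next
  case Top then show ?case by (simp add: D_top)
next
  case (Conj p q) then show ?case by (simp add: D_conj)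
next
  case (Disj I F)
  then obtain i where "i \<in> I" "D (fm_subst \<sigma> (F i))" by auto
  then show ?case using D_mp[OF _ disj_i[of i I "\<lambda>i. fm_subst \<sigma> (F i)"]] by simp
next
  case (Ex p)
  then obtain t where t: "sat TM (cons_val (rep t) (\<lambda>n. rep (\<sigma> n))) p" by auto
  have "cons_val (rep t) (\<lambda>n. rep (\<sigma> n)) = (\<lambda>n. rep (case_nat t \<sigma> n))"
    by (auto simp: cons_val_def split: nat.split)
  then have "D (fm_subst (case_nat t \<sigma>) p)" using Ex.IH t by simp
  moreover have "comp_s (case_nat t Var) (lift_subst \<sigma>) = case_nat t \<sigma>"
  proof
    fix n
    have "comp_s (case_nat t Var) (\<lambda>k. Var (Suc k)) = Var" by (auto simp: comp_s_def)
    then show "comp_s (case_nat t Var) (lift_subst \<sigma>) n = case_nat t \<sigma> n"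
      by (cases n) (simp_all add: comp_s_def lift_subst_def trm_subst_comp)
  qed
  ultimately have "D (fm_subst (case_nat t Var) (fm_subst (lift_subst \<sigma>) p))"
    by (simp add: fm_subst_comp)
  then show ?case using D_mp[OF _ ex_intro] by simp
qed

end


primrec conjs :: "'i fm list \<Rightarrow> 'i fm" where
  "conjs [] = Top"
| "conjs (x # xs) = Conj x (conjs xs)"

definition atom :: "'i fm \<Rightarrow> bool" where
  "atom \<phi> \<longleftrightarrow> (\<exists>a b. \<phi> = Eq a b \<or> \<phi> = Le a b)"

lemma shk_conjs: "shk k (conjs A) = conjs (map (shk k) A)"
  by (induction A) auto

lemma atom_shk: "atom \<phi> \<Longrightarrow> atom (shk k \<phi>)"
  by (auto simp: atom_def shk_def)

lemma atom_subst: "atom (fm_subst \<sigma> (Eq a b))" "atom (fm_subst \<sigma> (Le a b))"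
  by (auto simp: atom_def)

lemma prov_shk: "Lu_prov X Y \<Longrightarrow> Lu_prov (shk k X) (shk k Y)"
  unfolding shk_def by (rule subst)

lemma rearr_atom: "Lu_prov (Conj a (Conj b c)) (Conj (Conj b a) c)"
  by (rule conj_i[OF conj_i[OF cut[OF conj_e2 conj_e1] conj_e1] cut[OF conj_e2 conj_e2]])

lemma rearr_top: "Lu_prov (Conj a (Conj Top c)) (Conj a c)"
  by (rule conj_i[OF conj_e1 cut[OF conj_e2 conj_e2]])

lemma rearr_conj: "Lu_prov (Conj a (Conj (Conj b c) r)) (Conj a (Conj b (Conj c r)))"
  by (rule conj_i[OF conj_e1 conj_i[OF cut[OF conj_e2 cut[OF conj_e1 conj_e1]]
       conj_i[OF cut[OF conj_e2 cut[OF conj_e1 conj_e2]] cut[OF conj_e2 conj_e2]]]])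

lemma rearr_disj: "Lu_prov (Conj (Conj a r) g) (Conj a (Conj g r))"
  by (rule conj_i[OF cut[OF conj_e1 conj_e1] conj_i[OF conj_e2 cut[OF conj_e1 conj_e2]]])

lemma rearr_disj2: "Lu_prov (Conj a (Conj g r)) (Conj (Conj a r) g)"
  by (rule conj_i[OF conj_i[OF conj_e1 cut[OF conj_e2 conj_e2]] cut[OF conj_e2 conj_e1]])

lemma rearr_ex: "Lu_prov (Conj (Conj a r) p) (Conj a (Conj p r))"
  by (rule rearr_disj)

lemma np_mono: "Lu_prov X Y \<Longrightarrow> \<not> Lu_prov X q \<Longrightarrow> \<not> Lu_prov Y q"
  using cut by blast

lemma disj_lem:
  assumes "\<And>i. i \<in> I \<Longrightarrow> Lu_prov (Conj A (Conj (G i) R)) q"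
  shows "Lu_prov (Conj A (Conj (Disj I G) R)) q"
proof -
  have "Lu_prov (Disj I (\<lambda>i. Conj (Conj A R) (G i))) q"
    by (rule disj_e) (rule cut[OF rearr_disj assms])
  then show ?thesis using cut[OF rearr_disj2 cut[OF distrib]] by blast
qed

lemma ex_lem:
  assumes "Lu_prov (Conj (shk 1 A) (Conj P (shk 1 R))) (shk 1 q)"
  shows "Lu_prov (Conj A (Conj (fm.Ex P) R)) q"
proof -
  have "Lu_prov (Conj (lift_fm (Conj A R)) P) (lift_fm q)"
    using cut[OF rearr_ex assms] by (simp add: lift_shk)
  then have "Lu_prov (fm.Ex (Conj (lift_fm (Conj A R)) P)) q" by (rule ex_e)
  then have "Lu_prov (Conj (Conj A R) (fm.Ex P)) q" using cut[OF frobenius] by blast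
  then show ?thesis using cut[OF rearr_disj2] by blast
qed

lemma decomp:
  "list_all atom A \<Longrightarrow> \<not> Lu_prov (Conj (conjs A) (Conj (fm_subst \<sigma> p) R)) q \<Longrightarrow>
   \<exists>A' k. list_all atom A' \<and> \<not> Lu_prov (Conj (conjs A') (shk k R)) (shk k q) \<and>
     Lu_prov (conjs A') (shk k (fm_subst \<sigma> p)) \<and> Lu_prov (conjs A') (shk k (conjs A))"
proof (induction p arbitrary: \<sigma> A R q)
  case (Eq a b)
  let ?P = "fm_subst \<sigma> (Eq a b)"
  have "\<not> Lu_prov (Conj (conjs (?P # A)) R) q"
    using np_mono[OF rearr_atom Eq.prems(2)] by simp
  moreover have "list_all atom (?P # A)" using Eq.prems(1) atom_subst by simp
  ultimately show ?case
    by (intro exI[of _ "?P # A"] exI[of _ 0]) (auto intro: conj_e1 conj_e2)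
next
  case (Le a b)
  let ?P = "fm_subst \<sigma> (Le a b)"
  have "\<not> Lu_prov (Conj (conjs (?P # A)) R) q"
    using np_mono[OF rearr_atom Le.prems(2)] by simp
  moreover have "list_all atom (?P # A)" using Le.prems(1) atom_subst by simp
  ultimately show ?case
    by (intro exI[of _ "?P # A"] exI[of _ 0]) (auto intro: conj_e1 conj_e2)
next
  case Top
  have "\<not> Lu_prov (Conj (conjs A) R) q"
    using np_mono[OF rearr_top] Top.prems(2) by simp
  then show ?case using Top.prems(1)
    by (intro exI[of _ A] exI[of _ 0]) (auto intro: top_intro ident)
next
  case (Conj p1 p2)
  let ?P1 = "fm_subst \<sigma> p1" and ?P2 = "fm_subst \<sigma> p2"
  have "\<not> Lu_prov (Conj (conjs A) (Conj ?P1 (Conj ?P2 R))) q"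
    using np_mono[OF rearr_conj] Conj.prems(2) by simp
  from Conj.IH(1)[OF Conj.prems(1) this] obtain A1 k1 where
    A1: "list_all atom A1" "\<not> Lu_prov (Conj (conjs A1) (shk k1 (Conj ?P2 R))) (shk k1 q)"
    "Lu_prov (conjs A1) (shk k1 ?P1)" "Lu_prov (conjs A1) (shk k1 (conjs A))" by blast
  let ?s2 = "comp_s (\<lambda>n. Var (n + k1)) \<sigma>"
  have "\<not> Lu_prov (Conj (conjs A1) (Conj (fm_subst ?s2 p2) (shk k1 R))) (shk k1 q)"
    using A1(2) by (simp add: shk_subst)
  from Conj.IH(2)[OF A1(1) this] obtain A2 k2 where
    A2: "list_all atom A2" "\<not> Lu_prov (Conj (conjs A2) (shk k2 (shk k1 R))) (shk k2 (shk k1 q))"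
    "Lu_prov (conjs A2) (shk k2 (fm_subst ?s2 p2))" "Lu_prov (conjs A2) (shk k2 (conjs A1))" by blast
  have "Lu_prov (conjs A2) (shk k2 (shk k1 ?P1))" using A2(4) prov_shk[OF A1(3)] cut by blast
  moreover have "Lu_prov (conjs A2) (shk k2 (shk k1 ?P2))" using A2(3) by (simp add: shk_subst)
  moreover have "Lu_prov (conjs A2) (shk k2 (shk k1 (conjs A)))" using A2(4) prov_shk[OF A1(4)] cut by blast
  ultimately show ?case using A2(1,2)
    by (intro exI[of _ A2] exI[of _ "k1 + k2"]) (auto simp: shk_shk intro: conj_i)
next
  case (Disj I F)
  have "\<exists>i\<in>I. \<not> Lu_prov (Conj (conjs A) (Conj (fm_subst \<sigma> (F i)) R)) q"
    using Disj.prems(2) disj_lem[of I "conjs A" "\<lambda>i. fm_subst \<sigma> (F i)" R q] by auto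
  then obtain i where i: "i \<in> I" "\<not> Lu_prov (Conj (conjs A) (Conj (fm_subst \<sigma> (F i)) R)) q" by blast
  from Disj.IH[OF _ Disj.prems(1) i(2)] obtain A' k where
    A': "list_all atom A'" "\<not> Lu_prov (Conj (conjs A') (shk k R)) (shk k q)"
    "Lu_prov (conjs A') (shk k (fm_subst \<sigma> (F i)))" "Lu_prov (conjs A') (shk k (conjs A))" by blast
  have "Lu_prov (shk k (fm_subst \<sigma> (F i))) (shk k (fm_subst \<sigma> (Disj I F)))"
    using prov_shk[OF disj_i[OF i(1), of "\<lambda>i. fm_subst \<sigma> (F i)"]] by simp
  then show ?case using A' cut by blast
next
  case (Ex p)
  let ?P = "fm_subst (lift_subst \<sigma>) p"
  have "\<not> Lu_prov (Conj (conjs (map (shk 1) A)) (Conj ?P (shk 1 R))) (shk 1 q)"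
    using Ex.prems(2) ex_lem[of "conjs A" ?P R q] by (auto simp: shk_conjs)
  moreover have "list_all atom (map (shk 1) A)" using Ex.prems(1)
    by (auto simp: list_all_iff intro: atom_shk)
  ultimately obtain A' k where
    A': "list_all atom A'" "\<not> Lu_prov (Conj (conjs A') (shk k (shk 1 R))) (shk k (shk 1 q))"
    "Lu_prov (conjs A') (shk k ?P)" "Lu_prov (conjs A') (shk k (conjs (map (shk 1) A)))"
    using Ex.IH by blast
  have "Lu_prov ?P (shk 1 (fm.Ex ?P))" using ex_i[OF ident] by (simp add: lift_shk)
  then have "Lu_prov (conjs A') (shk k (shk 1 (fm.Ex ?P)))" using A'(3) prov_shk cut by blast
  then show ?case using A' 
    by (intro exI[of _ A'] exI[of _ "1 + k"]) (auto simp: shk_shk shk_conjs[symmetric])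
qed


lemma trm_subst_nu[simp]: "trm_subst s (nu n) = nu n"
  by (induction n) auto

definition bndf :: "trm \<Rightarrow> nat \<Rightarrow> 'i fm" where
  "bndf t n = Le (trm.Sup t Zero) (nu n)"

lemma bound_split:
  assumes inf: "infinite (UNIV :: 'i set)" and np: "\<not> Lu_prov C Q"
  shows "\<exists>n. \<not> Lu_prov (Conj C (bndf t n :: 'i fm)) Q"
proof (rule ccontr)
  assume "\<not> ?thesis"
  then have all: "\<And>n. Lu_prov (Conj C (bndf t n)) Q" by blast
  obtain g :: "nat \<Rightarrow> 'i" where g: "inj g" using inf infinite_countable_subset by blast
  define F :: "'i \<Rightarrow> 'i fm" where "F i = Le vx (nu (inv g i))" for i
  have "F ` range g = range (\<lambda>n. Le vx (nu n))"
    using g by (auto simp: F_def image_iff)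
  then have ax: "Lu_prov (Le Zero vx) (Disj (range g) F)" by (intro axiom ax_strong_unit)
  have "Lu_prov (fm_subst (sl [trm.Sup t Zero]) (Le Zero vx)) (fm_subst (sl [trm.Sup t Zero]) (Disj (range g) F))"
    by (rule subst[OF ax])
  then have 1: "Lu_prov (Le Zero (trm.Sup t Zero)) (Disj (range g) (\<lambda>i. bndf t (inv g i)))"
    by (simp add: F_def bndf_def)
  have "Lu_prov Top (fm_subst (sl [t, Zero]) (Le vy (trm.Sup vx vy)))"
    by (rule prov_top_subst, rule axiom, rule ax_sup2)
  then have "Lu_prov Top (Le Zero (trm.Sup t Zero))" by simp
  then have "Lu_prov C (Disj (range g) (\<lambda>i. bndf t (inv g i)))" using cut[OF cut[OF top_intro] 1] by blast
  then have "Lu_prov C (Conj C (Disj (range g) (\<lambda>i. bndf t (inv g i))))" using ident conj_i by blast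
  moreover have "Lu_prov (Disj (range g) (\<lambda>i. Conj C (bndf t (inv g i)))) Q"
    by (rule disj_e) (auto intro: all)
  ultimately have "Lu_prov C Q" using cut[OF _ cut[OF distrib]] by blast
  with np show False by blast
qed

primrec chain :: "'i fm \<Rightarrow> 'i fm \<Rightarrow> nat \<Rightarrow> 'i fm" where
  "chain C Q 0 = C"
| "chain C Q (Suc k) = Conj (chain C Q k)
     (bndf (from_nat k) (SOME n. \<not> Lu_prov (Conj (chain C Q k) (bndf (from_nat k) n)) Q))"

lemma chain_np:
  assumes "infinite (UNIV :: 'i set)" "\<not> Lu_prov C (Q :: 'i fm)"
  shows "\<not> Lu_prov (chain C Q k) Q"
proof (induction k)
  case 0 then show ?case using assms by simp
next
  case (Suc k)
  then show ?case using someI_ex[OF bound_split[OF assms(1) Suc, of "from_nat k"]] by simp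
qed

lemma chain_mono: "j \<le> k \<Longrightarrow> Lu_prov (chain C Q k) (chain C Q j)"
proof (induction k)
  case 0 then show ?case by (simp add: ident)
next
  case (Suc k)
  then show ?case
  proof (cases "j = Suc k")
    case True then show ?thesis by (simp add: ident)
  next
    case False
    then have "Lu_prov (chain C Q k) (chain C Q j)" using Suc by simp
    then show ?thesis using cut[OF conj_e1] by simp
  qed
qed

lemma chain_thy: "thy (\<lambda>\<phi>. \<exists>j. Lu_prov (chain C Q j) \<phi>)"
proof
  show "\<exists>j. Lu_prov (chain C Q j) \<psi>" if "\<exists>j. Lu_prov (chain C Q j) \<phi>" "Lu_prov \<phi> \<psi>" for \<phi> \<psi>
    using that cut[of "chain C Q _" \<phi> \<psi>] by blast
  show "\<exists>j. Lu_prov (chain C Q j) (Conj \<phi> \<psi>)"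
    if "\<exists>j. Lu_prov (chain C Q j) \<phi>" "\<exists>j. Lu_prov (chain C Q j) \<psi>" for \<phi> \<psi>
  proof -
    from that obtain j1 j2 where "Lu_prov (chain C Q j1) \<phi>" "Lu_prov (chain C Q j2) \<psi>" by blast
    then have "Lu_prov (chain C Q (max j1 j2)) \<phi>" "Lu_prov (chain C Q (max j1 j2)) \<psi>"
      using cut[OF chain_mono[of j1 "max j1 j2" C Q]] cut[OF chain_mono[of j2 "max j1 j2" C Q]] by auto
    then show ?thesis using conj_i by blast
  qed
  show "\<exists>j. Lu_prov (chain C Q j) Top" using top_intro by blast
  show "\<exists>n j. Lu_prov (chain C Q j) (Le (trm.Sup t Zero) (nu n))" for t
  proof -
    let ?n = "SOME n. \<not> Lu_prov (Conj (chain C Q (to_nat t)) (bndf (from_nat (to_nat t)) n)) Q"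
    have "Lu_prov (chain C Q (Suc (to_nat t))) (bndf t ?n)"
      using conj_e2[of "chain C Q (to_nat t)" "bndf t ?n"] by simp
    then show ?thesis unfolding bndf_def by blast
  qed
qed

lemma conjs_mem: "a \<in> set A \<Longrightarrow> Lu_prov (conjs A) a"
proof (induction A)
  case (Cons x A)
  then show ?case using conj_e1[of x "conjs A"] cut[OF conj_e2[of x "conjs A"]] by auto
qed simp

lemma (in tm) sat_conjs:
  "list_all atom A \<Longrightarrow> (\<forall>a\<in>set A. D a) \<Longrightarrow> sat TM (\<lambda>n. rep (Var n)) (conjs A)"
proof (induction A)
  case (Cons x A)
  have "sat TM (\<lambda>n. rep (Var n)) x"
    using Cons.prems eval_rep[of Var] by (auto simp: atom_def rep_eq)
  then show ?case using Cons by simp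
qed simp

theorem completeness:
  assumes infi: "infinite (UNIV :: 'i set)" and infa: "infinite (UNIV :: 'a set)"
    and val: "\<forall>M :: 'a lstr. unital_lgroup M \<longrightarrow> valid_in M p q"
  shows "Lu_prov (p :: 'i fm) q"
proof (rule ccontr)
  assume np: "\<not> Lu_prov p q"
  have "\<not> Lu_prov (Conj (conjs []) (Conj (fm_subst Var p) Top)) q"
  proof
    assume "Lu_prov (Conj (conjs []) (Conj (fm_subst Var p) Top)) q"
    moreover have "Lu_prov p (Conj (conjs []) (Conj (fm_subst Var p) Top))"
      by (simp add: conj_i top_intro ident)
    ultimately show False using np cut[of p _ q] by blast
  qed
  moreover have la: "list_all atom ([] :: 'i fm list)" by simp
  ultimately obtain A k where
    A: "list_all atom A" "\<not> Lu_prov (Conj (conjs A) (shk k Top)) (shk k q)"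
    "Lu_prov (conjs A) (shk k (fm_subst Var p))"
    using decomp[OF la] by blast
  note A(3)[simplified]
  define C where "C = conjs A"
  define Q where "Q = shk k q"
  have npC: "\<not> Lu_prov C Q"
    using np_mono[OF conj_e1 A(2)] unfolding C_def Q_def .
  obtain enc :: "nat \<Rightarrow> 'a" where enc: "inj enc" using infa infinite_countable_subset by blast
  define D where "D = (\<lambda>\<phi>. \<exists>j. Lu_prov (chain C Q j) \<phi>)"
  interpret T: tm D enc
    unfolding D_def using chain_thy enc by (simp add: tm_def tm_axioms_def)
  let ?v = "\<lambda>n. T.rep (Var n)"
  have "\<forall>a\<in>set A. D a"
  proof
    fix a assume "a \<in> set A"
    then have "Lu_prov (chain C Q 0) a" by (simp add: C_def conjs_mem)
    then show "D a" unfolding D_def by blast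
  qed
  then have sC: "sat T.TM ?v C" using T.sat_conjs A(1) C_def by simp
  have vc: "\<forall>n. ?v n \<in> l_carrier T.TM" by simp
  have A3: "Lu_prov C (shk k p)" using A(3) C_def by simp
  have "sat T.TM ?v (shk k p)"
    by (rule prov_sound[OF A3 T.TM_lgroup vc sC])
  then have sp: "sat T.TM (\<lambda>n. T.rep (Var (n + k))) p"
    by (simp add: shk_def sat_subst)
  have "\<not> sat T.TM ?v Q"
  proof
    assume "sat T.TM ?v Q"
    then have "D (fm_subst Var Q)" by (rule T.truth)
    then show False using chain_np[OF infi npC] unfolding D_def by simp
  qed
  then have sq: "\<not> sat T.TM (\<lambda>n. T.rep (Var (n + k))) q"
    by (simp add: Q_def shk_def sat_subst)
  have "valid_in T.TM p q" using val T.TM_lgroup by blast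
  then show False using sp sq unfolding valid_in_def by auto
qed


locale ulg =
  fixes M :: "('a, 'b) lstr_scheme"
  assumes ul: "unital_lgroup M"
begin

abbreviation "C \<equiv> l_carrier M"
abbreviation pl (infixl "\<oplus>" 65) where "x \<oplus> y \<equiv> l_add M x y"
abbreviation "ng \<equiv> l_neg M"
abbreviation "z \<equiv> l_zero M"
abbreviation "N \<equiv> l_nu M"

lemmas U = UL[OF ul]

lemma assoc: "x \<in> C \<Longrightarrow> y \<in> C \<Longrightarrow> w \<in> C \<Longrightarrow> (x \<oplus> y) \<oplus> w = x \<oplus> (y \<oplus> w)" by (rule U(7))
lemma comm: "x \<in> C \<Longrightarrow> y \<in> C \<Longrightarrow> x \<oplus> y = y \<oplus> x" by (rule U(8))
lemma zr: "x \<in> C \<Longrightarrow> x \<oplus> z = x" by (rule U(9))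
lemma zl: "x \<in> C \<Longrightarrow> z \<oplus> x = x" using comm zr U(1) by metis
lemma nr: "x \<in> C \<Longrightarrow> x \<oplus> ng x = z" by (rule U(10))
lemma nl: "x \<in> C \<Longrightarrow> ng x \<oplus> x = z" using comm nr U(6) by metis
lemma addC: "x \<in> C \<Longrightarrow> y \<in> C \<Longrightarrow> x \<oplus> y \<in> C" by (rule U(3))
lemma negC: "x \<in> C \<Longrightarrow> ng x \<in> C" by (rule U(6))

lemma NC: "N n \<in> C"
  by (induction n) (auto simp: l_nu_def U(1,2) addC)

lemma N_Suc: "N (Suc n) = N n \<oplus> l_unit M" by (simp add: l_nu_def)
lemma N_0: "N 0 = z" by (simp add: l_nu_def)

lemma N_add: "N (m + n) = N m \<oplus> N n"
proof (induction n)
  case 0 then show ?case by (simp add: N_0 zr NC)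
next
  case (Suc n) then show ?case by (simp add: N_Suc assoc NC U(2))
qed

lemma neg_unique: "x \<in> C \<Longrightarrow> y \<in> C \<Longrightarrow> x \<oplus> y = z \<Longrightarrow> y = ng x"
proof -
  assume x: "x \<in> C" and y: "y \<in> C" and e: "x \<oplus> y = z"
  have "y = y \<oplus> (x \<oplus> ng x)" using x y by (simp add: nr zr)
  also have "\<dots> = (y \<oplus> x) \<oplus> ng x" using x y negC assoc by simp
  also have "\<dots> = ng x" using x y e comm zl negC by simp
  finally show ?thesis .
qed

lemma neg_add: "x \<in> C \<Longrightarrow> y \<in> C \<Longrightarrow> ng (x \<oplus> y) = ng x \<oplus> ng y"
proof -
  assume x: "x \<in> C" and y: "y \<in> C"
  have "(x \<oplus> y) \<oplus> (ng x \<oplus> ng y) = (x \<oplus> ng x) \<oplus> (y \<oplus> ng y)"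
  proof -
    have "(x \<oplus> y) \<oplus> (ng x \<oplus> ng y) = x \<oplus> (y \<oplus> (ng x \<oplus> ng y))" using x y by (simp add: assoc addC negC)
    also have "y \<oplus> (ng x \<oplus> ng y) = ng x \<oplus> (y \<oplus> ng y)"
      using x y by (metis assoc comm negC)
    also have "x \<oplus> (ng x \<oplus> (y \<oplus> ng y)) = (x \<oplus> ng x) \<oplus> (y \<oplus> ng y)" using x y by (simp add: assoc addC negC)
    finally show ?thesis .
  qed
  also have "\<dots> = z" using x y by (simp add: nr zr U(1))
  finally show ?thesis using neg_unique[of "x \<oplus> y" "ng x \<oplus> ng y"] x y addC negC by metis
qed

lemma ac4: "x \<in> C \<Longrightarrow> y \<in> C \<Longrightarrow> u \<in> C \<Longrightarrow> w \<in> C \<Longrightarrow> (x \<oplus> y) \<oplus> (u \<oplus> w) = (x \<oplus> u) \<oplus> (y \<oplus> w)"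
proof -
  assume x: "x \<in> C" and y: "y \<in> C" and u: "u \<in> C" and w: "w \<in> C"
  have "(x \<oplus> y) \<oplus> (u \<oplus> w) = x \<oplus> (y \<oplus> (u \<oplus> w))" using x y u w by (simp add: assoc addC)
  also have "y \<oplus> (u \<oplus> w) = u \<oplus> (y \<oplus> w)" using y u w by (metis assoc comm)
  also have "x \<oplus> (u \<oplus> (y \<oplus> w)) = (x \<oplus> u) \<oplus> (y \<oplus> w)" using x y u w by (simp add: assoc addC)
  finally show ?thesis .
qed

definition hz :: "int \<Rightarrow> 'a" where
  "hz i = (if 0 \<le> i then N (nat i) else ng (N (nat (- i))))"

lemma hzC: "hz i \<in> C" by (simp add: hz_def NC negC)

lemma hz_diff: "hz (int m - int n) = N m \<oplus> ng (N n)"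
proof (cases "n \<le> m")
  case True
  then obtain d where m: "m = n + d" using le_Suc_ex by blast
  have "N m \<oplus> ng (N n) = (N d \<oplus> N n) \<oplus> ng (N n)" using m N_add NC comm by (metis add.commute)
  also have "\<dots> = N d" using NC by (simp add: assoc negC nr zr)
  finally show ?thesis using m by (simp add: hz_def)
next
  case False
  define d where "d = n - Suc m"
  have n: "n = m + Suc d" using False d_def by simp
  have "ng (N n) = ng (N m) \<oplus> ng (N (Suc d))" unfolding n N_add by (rule neg_add[OF NC NC])
  then have "N m \<oplus> ng (N n) = N m \<oplus> (ng (N m) \<oplus> ng (N (Suc d)))" by simp
  also have "\<dots> = (N m \<oplus> ng (N m)) \<oplus> ng (N (Suc d))" by (rule assoc[symmetric, OF NC negC[OF NC] negC[OF NC]])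
  also have "\<dots> = ng (N (Suc d))" by (simp add: nr[OF NC] zl[OF negC[OF NC]])
  finally have "N m \<oplus> ng (N n) = ng (N (Suc d))" .
  moreover have "nat (- (int m - int n)) = Suc d" using n by simp
  moreover have "\<not> 0 \<le> int m - int n" using n by simp
  ultimately show ?thesis unfolding hz_def by presburger
qed

lemma int_diff: "\<exists>m n. i = int m - int n"
  by (rule exI[of _ "nat i"], rule exI[of _ "nat (- i)"]) simp

lemma hz_add: "hz (i + j) = hz i \<oplus> hz j"
proof -
  obtain m1 n1 m2 n2 where i: "i = int m1 - int n1" and j: "j = int m2 - int n2"
    using int_diff by metis
  have e: "i + j = int (m1 + m2) - int (n1 + n2)" using i j by simp
  have "hz (i + j) = N (m1 + m2) \<oplus> ng (N (n1 + n2))"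
    by (subst e) (rule hz_diff)
  also have "\<dots> = (N m1 \<oplus> N m2) \<oplus> (ng (N n1) \<oplus> ng (N n2))"
    by (simp add: N_add neg_add NC)
  also have "\<dots> = (N m1 \<oplus> ng (N n1)) \<oplus> (N m2 \<oplus> ng (N n2))" by (simp add: ac4 NC negC)
  finally show ?thesis using i j by (simp add: hz_diff)
qed

lemma hz_neg: "hz (- i) = ng (hz i)"
proof -
  obtain m n where i: "i = int m - int n" using int_diff by metis
  have "- i = int n - int m" using i by simp
  then have "hz (- i) = N n \<oplus> ng (N m)" by (simp add: hz_diff)
  also have "\<dots> = ng (N m \<oplus> ng (N n))"
  proof -
    have "ng (ng (N n)) = N n" using neg_unique[of "ng (N n)" "N n"] nl NC negC by metis
    then show ?thesis using NC negC neg_add comm by metis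
  qed
  finally show ?thesis using i by (simp add: hz_diff)
qed

lemma hz0: "hz 0 = z" by (simp add: hz_def N_0)
lemma hz1: "hz 1 = l_unit M" by (simp add: hz_def l_nu_def zl U(2))

lemma N_pos: "l_le M z (N n)"
proof (induction n)
  case 0 then show ?case by (simp add: N_0 U(1,11))
next
  case (Suc n)
  have "l_le M (N n \<oplus> z) (N n \<oplus> l_unit M)" using U(20)[OF U(1) U(2) NC U(21)] .
  then have "l_le M (N n) (N (Suc n))" by (simp add: zr NC N_Suc)
  then show ?case using Suc U(12)[OF U(1) NC NC] by blast
qed

lemma hz_mono: "i \<le> j \<Longrightarrow> l_le M (hz i) (hz j)"
proof -
  assume "i \<le> j"
  then obtain d where j: "j = i + int d" by (metis zle_iff_zadd)
  have "hz (int d) = N d" by (simp add: hz_def)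
  then have "hz j = hz i \<oplus> N d" using j hz_add by simp
  moreover have "l_le M (hz i \<oplus> z) (hz i \<oplus> N d)" using U(20)[OF U(1) NC hzC N_pos] .
  ultimately show ?thesis by (simp add: zr hzC)
qed

lemma sup_eq: "x \<in> C \<Longrightarrow> y \<in> C \<Longrightarrow> l_le M x y \<Longrightarrow> l_sup M x y = y"
  by (rule U(13)[OF U(4) _ U(16)[OF _ _ _ _ U(11)] U(15)]) assumption+

lemma inf_eq: "x \<in> C \<Longrightarrow> y \<in> C \<Longrightarrow> l_le M x y \<Longrightarrow> l_inf M x y = x"
  by (rule U(13)[OF U(5) _ U(17) U(19)[OF _ _ _ U(11)]]) assumption+

lemma sup_comm: "x \<in> C \<Longrightarrow> y \<in> C \<Longrightarrow> l_sup M x y = l_sup M y x"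
proof -
  assume x: "x \<in> C" and y: "y \<in> C"
  have 1: "l_le M (l_sup M x y) (l_sup M y x)" by (rule U(16)[OF x y U(4)[OF y x] U(15)[OF y x] U(14)[OF y x]])
  have 2: "l_le M (l_sup M y x) (l_sup M x y)" by (rule U(16)[OF y x U(4)[OF x y] U(15)[OF x y] U(14)[OF x y]])
  show ?thesis by (rule U(13)[OF U(4)[OF x y] U(4)[OF y x] 1 2])
qed

lemma inf_comm: "x \<in> C \<Longrightarrow> y \<in> C \<Longrightarrow> l_inf M x y = l_inf M y x"
proof -
  assume x: "x \<in> C" and y: "y \<in> C"
  have 1: "l_le M (l_inf M x y) (l_inf M y x)" by (rule U(19)[OF y x U(5)[OF x y] U(18)[OF x y] U(17)[OF x y]])
  have 2: "l_le M (l_inf M y x) (l_inf M x y)" by (rule U(19)[OF x y U(5)[OF y x] U(18)[OF y x] U(17)[OF y x]])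
  show ?thesis by (rule U(13)[OF U(5)[OF x y] U(5)[OF y x] 1 2])
qed

lemma hz_max: "hz (max i j) = l_sup M (hz i) (hz j)"
proof (cases "i \<le> j")
  case True then show ?thesis using sup_eq hzC hz_mono by (simp add: max_def)
next
  case False
  then have "l_sup M (hz i) (hz j) = l_sup M (hz j) (hz i)"
    using sup_comm hzC by blast
  then show ?thesis using False sup_eq hzC hz_mono by (simp add: max_def)
qed

lemma hz_min: "hz (min i j) = l_inf M (hz i) (hz j)"
proof (cases "i \<le> j")
  case True then show ?thesis using inf_eq hzC hz_mono by (simp add: min_def)
next
  case False
  then have "l_inf M (hz i) (hz j) = l_inf M (hz j) (hz i)"
    using inf_comm hzC by blast
  then show ?thesis using False inf_eq hzC hz_mono by (simp add: min_def)
qed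

end


definition ZM :: "(int \<Rightarrow> 'a) \<Rightarrow> 'a lstr" where
  "ZM e = \<lparr> l_carrier = range e, l_zero = e 0, l_unit = e 1,
     l_add = (\<lambda>x y. e (inv e x + inv e y)), l_neg = (\<lambda>x. e (- inv e x)),
     l_sup = (\<lambda>x y. e (max (inv e x) (inv e y))), l_inf = (\<lambda>x y. e (min (inv e x) (inv e y))),
     l_le = (\<lambda>x y. inv e x \<le> inv e y) \<rparr>"

context
  fixes e :: "int \<Rightarrow> 'a"
  assumes e: "inj e"
begin

lemma ZM_simps[simp]:
  "l_carrier (ZM e) = range e" "l_zero (ZM e) = e 0" "l_unit (ZM e) = e 1"
  "l_add (ZM e) (e a) (e b) = e (a + b)"
  "l_neg (ZM e) (e a) = e (- a)"
  "l_sup (ZM e) (e a) (e b) = e (max a b)"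
  "l_inf (ZM e) (e a) (e b) = e (min a b)"
  "l_le (ZM e) (e a) (e b) = (a \<le> b)"
  using e by (auto simp: ZM_def)

lemma ZM_nu: "l_nu (ZM e) n = e (int n)"
  by (induction n) (simp_all add: l_nu_def add.commute)

lemma ZM_lgroup: "unital_lgroup (ZM e)"
proof -
  have ball: "\<And>P. (\<forall>x\<in>range e. P x) = (\<forall>t. P (e t))" by auto
  have su: "\<And>t. 0 \<le> t \<Longrightarrow> \<exists>n. t \<le> int n" by presburger
  show ?thesis
    unfolding unital_lgroup_def Let_def ZM_simps(1) ball
    using e by (simp add: inj_eq ZM_nu su add.assoc add.commute)
qed

end

lemma ZM_range: "inj e \<Longrightarrow> \<forall>n. w n \<in> range e \<Longrightarrow> \<exists>x. eval (ZM e) w t = e x"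
  using eval_carrier[OF ZM_lgroup, of e w t] by auto

lemma (in ulg) eval_hom:
  assumes "inj e" "\<forall>n. w n \<in> range e"
  shows "eval M (\<lambda>n. hz (inv e (w n))) t = hz (inv e (eval (ZM e) w t))"
  using assms
proof (induction t)
  case (Plus a b)
  then obtain x y where "eval (ZM e) w a = e x" "eval (ZM e) w b = e y"
    using ZM_range[OF assms] by metis
  then show ?case using Plus by (simp add: hz_add)
next
  case (Neg a)
  then obtain x where "eval (ZM e) w a = e x"
    using ZM_range[OF assms] by metis
  then show ?case using Neg by (simp add: hz_neg)
next
  case (Sup a b)
  then obtain x y where "eval (ZM e) w a = e x" "eval (ZM e) w b = e y"
    using ZM_range[OF assms] by metis
  then show ?case using Sup by (simp add: hz_max)
next
  case (Inf a b)
  then obtain x y where "eval (ZM e) w a = e x" "eval (ZM e) w b = e y"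
    using ZM_range[OF assms] by metis
  then show ?case using Inf by (simp add: hz_min)
qed (auto simp: hz0 hz1)

lemma (in ulg) sat_hom:
  assumes "inj e"
  shows "\<forall>n. w n \<in> range e \<Longrightarrow> sat (ZM e) w \<phi> \<Longrightarrow> sat M (\<lambda>n. hz (inv e (w n))) \<phi>"
proof (induction \<phi> arbitrary: w)
  case (Eq a b) then show ?case using eval_hom[OF assms] by simp
next
  case (Le a b)
  then obtain x y where "eval (ZM e) w a = e x" "eval (ZM e) w b = e y"
    using ZM_range[OF assms Le.prems(1)] by metis
  then show ?case using Le eval_hom[OF assms] assms hz_mono by simp
next
  case (Ex p)
  then obtain a where a: "a \<in> range e" "sat (ZM e) (cons_val a w) p" using assms by auto
  have c: "\<forall>n. cons_val a w n \<in> range e" using a Ex.prems by (simp add: cons_val_def split: nat.split)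
  have "(\<lambda>n. hz (inv e (cons_val a w n))) = cons_val (hz (inv e a)) (\<lambda>n. hz (inv e (w n)))"
    by (auto simp: cons_val_def split: nat.split)
  then show ?case using Ex.IH[OF c a(2)] hzC by auto
next
  case (Disj I F)
  then obtain i where "i \<in> I" "sat (ZM e) w (F i)" by auto
  then have "sat M (\<lambda>n. hz (inv e (w n))) (F i)" using Disj.IH[of "F i" w] Disj.prems by auto
  then show ?case using \<open>i \<in> I\<close> by auto
qed auto

lemma eval_closed: "trm_closed k t \<Longrightarrow> (\<forall>n<k. v n = v' n) \<Longrightarrow> eval M v t = eval M v' t"
  by (induction t) auto

lemma sat_closed: "fm_closed k \<phi> \<Longrightarrow> (\<forall>n<k. v n = v' n) \<Longrightarrow> sat M v \<phi> = sat M v' \<phi>"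
proof (induction \<phi> arbitrary: k v v')
  case (Eq a b) then show ?case using eval_closed[of k _ v v' M] by simp
next
  case (Le a b) then show ?case using eval_closed[of k _ v v' M] by simp
next
  case (Ex p)
  have "\<And>a. \<forall>n<Suc k. cons_val a v n = cons_val a v' n"
    using Ex.prems by (auto simp: cons_val_def split: nat.split)
  then have "\<And>a. sat M (cons_val a v) p = sat M (cons_val a v') p"
    using Ex.IH[of "Suc k"] Ex.prems by simp
  then show ?case by simp
next
  case (Conj p1 p2)
  then have "sat M v p1 = sat M v' p1" "sat M v p2 = sat M v' p2"
    using Conj.IH[of k v v'] Conj.prems by simp_all
  then show ?case by simp
next
  case (Disj I F)
  have "\<forall>i\<in>I. sat M v (F i) = sat M v' (F i)"
  proof
    fix i assume "i \<in> I"
    then show "sat M v (F i) = sat M v' (F i)"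
      using Disj.IH[of "F i" k v v'] Disj.prems by simp
  qed
  then show ?case by simp
qed auto

lemma sentence_sat: "sentence \<phi> \<Longrightarrow> sat M v \<phi> = sat M v' \<phi>"
  unfolding sentence_def using sat_closed by blast

lemma sem_compact:
  assumes infa: "infinite (UNIV :: 'a set)"
    and sent: "\<forall>i\<in>I. sentence (phi i)"
  shows "(\<forall>M :: 'a lstr. unital_lgroup M \<longrightarrow> valid_in M Top (Disj I phi)) \<longleftrightarrow>
          (\<exists>J\<subseteq>I. finite J \<and> (\<forall>M :: 'a lstr. unital_lgroup M \<longrightarrow> valid_in M Top (Disj J phi)))"
proof
  assume all: "\<forall>M :: 'a lstr. unital_lgroup M \<longrightarrow> valid_in M Top (Disj I phi)"
  obtain enc :: "nat \<Rightarrow> 'a" where enc: "inj enc" using infa infinite_countable_subset by blast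
  define e :: "int \<Rightarrow> 'a" where "e = enc \<circ> to_nat"
  have e: "inj e" unfolding e_def using enc by (simp add: inj_compose)
  have "valid_in (ZM e) Top (Disj I phi)" using all ZM_lgroup[OF e] by blast
  then obtain i where i: "i \<in> I" "sat (ZM e) (\<lambda>_. e 0) (phi i)"
    unfolding valid_in_def using e by (auto dest!: spec[of _ "\<lambda>_. e 0"])
  have "\<forall>M :: 'a lstr. unital_lgroup M \<longrightarrow> valid_in M Top (Disj {i} phi)"
  proof (intro allI impI)
    fix M :: "'a lstr" assume ul: "unital_lgroup M"
    interpret ulg M by (rule ulg.intro[OF ul])
    have "sat M (\<lambda>n. hz (inv e ((\<lambda>_. e 0) n))) (phi i)"
      using sat_hom[OF e, of "\<lambda>_. e 0" "phi i"] i(2) by auto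
    then show "valid_in M Top (Disj {i} phi)"
      unfolding valid_in_def using sentence_sat[of "phi i" M] sent i(1) by auto
  qed
  then show "\<exists>J\<subseteq>I. finite J \<and> (\<forall>M :: 'a lstr. unital_lgroup M \<longrightarrow> valid_in M Top (Disj J phi))"
    using i(1) by (intro exI[of _ "{i}"]) auto
next
  assume "\<exists>J\<subseteq>I. finite J \<and> (\<forall>M :: 'a lstr. unital_lgroup M \<longrightarrow> valid_in M Top (Disj J phi))"
  then show "\<forall>M :: 'a lstr. unital_lgroup M \<longrightarrow> valid_in M Top (Disj I phi)"
    unfolding valid_in_def by fastforce
qed

theorem theorem5p9:
  assumes "infinite (UNIV :: 'i set)" and "infinite (UNIV :: 'a set)"
  shows
   "(\<forall>(p :: 'i fm) q.
       (\<forall>M :: 'a lstr. unital_lgroup M \<longrightarrow> valid_in M p q) \<longleftrightarrow> Lu_prov p q)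
    \<and>
    (\<forall>(I :: 'i set) (phi :: 'i \<Rightarrow> 'i fm). (\<forall>i\<in>I. sentence (phi i)) \<longrightarrow>
       (Lu_prov Top (Disj I phi) \<longleftrightarrow>
          (\<exists>J\<subseteq>I. finite J \<and> Lu_prov Top (Disj J phi))) \<and>
       ((\<forall>M :: 'a lstr. unital_lgroup M \<longrightarrow> valid_in M Top (Disj I phi)) \<longleftrightarrow>
          (\<exists>J\<subseteq>I. finite J \<and>
             (\<forall>M :: 'a lstr. unital_lgroup M \<longrightarrow> valid_in M Top (Disj J phi)))))"
proof -
  have P1: "\<And>(p :: 'i fm) q. (\<forall>M :: 'a lstr. unital_lgroup M \<longrightarrow> valid_in M p q) \<longleftrightarrow> Lu_prov p q"
  proof
    fix p q :: "'i fm"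
    show "\<forall>M :: 'a lstr. unital_lgroup M \<longrightarrow> valid_in M p q \<Longrightarrow> Lu_prov p q"
      by (rule completeness[OF assms])
    show "Lu_prov p q \<Longrightarrow> \<forall>M :: 'a lstr. unital_lgroup M \<longrightarrow> valid_in M p q"
      unfolding valid_in_def using prov_sound by blast
  qed
  show ?thesis
  proof (intro conjI allI impI)
    fix p q :: "'i fm" show "(\<forall>M :: 'a lstr. unital_lgroup M \<longrightarrow> valid_in M p q) \<longleftrightarrow> Lu_prov p q"
      by (rule P1)
  next
    fix I :: "'i set" and phi :: "'i \<Rightarrow> 'i fm" assume s: "\<forall>i\<in>I. sentence (phi i)"
    show "Lu_prov Top (Disj I phi) \<longleftrightarrow> (\<exists>J\<subseteq>I. finite J \<and> Lu_prov Top (Disj J phi))"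
      using sem_compact[OF assms(2) s] unfolding P1[symmetric] .
    show "(\<forall>M :: 'a lstr. unital_lgroup M \<longrightarrow> valid_in M Top (Disj I phi)) \<longleftrightarrow>
          (\<exists>J\<subseteq>I. finite J \<and> (\<forall>M :: 'a lstr. unital_lgroup M \<longrightarrow> valid_in M Top (Disj J phi)))"
      by (rule sem_compact[OF assms(2) s])
  qed
qed


end
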